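(* Fix $n\ge 1$, $\theta\in(1/2,7/8]$, an integer $k\ge 1$, an interval $[\underline h,\bar h]\subset(0,1)$, $h_1\in[0,1]$ and $\alpha\in[0,1]$. Fix any realization of the couplings $(J_X)_{X\subset\{1,\dots,n\}}$ (with $J_X\ge 0$) and of the integer vector $\boldsymbol\tau=(\tau_1,\dots,\tau_n)$. Assume that for every $h_0\in[\underline h,\bar h]$ the Gibbs measure $\langle\cdot\rangle_{h_0,h_1,\alpha}$ satisfies $\langle\sigma_i\sigma_j\rangle_{h_0,h_1,\alpha}-\langle\sigma_i\rangle_{h_0,h_1,\alpha}\langle\sigma_j\rangle_{h_0,h_1,\alpha}\ge 0$ for all $i,j\in\{1,\dots,n\}$. Then $$\int_{\underline h}^{\bar h}dh_0\,\big\langle\big(Q_k-\langle Q_k\rangle_{h_0,h_1,\alpha}\big)^2\big\rangle_{h_0,h_1,\alpha}\le\frac{2k}{n}.$$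
   Context: Spins $\boldsymbol\sigma=(\sigma_1,\dots,\sigma_n)\in\{-1,1\}^n$; for $X\subset\{1,\dots,n\}$ write $\sigma_X=\prod_{i\in X}\sigma_i$. The couplings $J_X\ge 0$ are indexed by all subsets $X\subset\{1,\dots,n\}$; $\tau_i$ are nonnegative integers (in the random model they are i.i.d. Poisson with mean $\alpha n^{\theta-1}$, independent of the couplings). The Hamiltonian is $\mathcal H(\boldsymbol\sigma)=-\sum_{X\subset\{1,\dots,n\}}J_X\sigma_X-h_0\sum_{i=1}^n\sigma_i-h_1\sum_{i=1}^n\tau_i\sigma_i$, with partition function $\mathcal Z=\sum_{\boldsymbol\sigma}e^{-\mathcal H(\boldsymbol\sigma)}$ and Gibbs expectation $\langle f\rangle_{h_0,h_1,\alpha}=\mathcal Z^{-1}\sum_{\boldsymbol\sigma}f(\boldsymbol\sigma)e^{-\mathcal H(\boldsymbol\sigma)}$. For functions of $k$ replicas $\boldsymbol\sigma^{(1)},\dots,\boldsymbol\sigma^{(k)}$, $\langle\cdot\rangle$ denotes expectation under the $k$-fold product of the Gibbs measure (independent replicas). The overlap is $Q_k=\frac1n\sum_{i=1}^n\sigma_i^{(1)}\cdots\sigma_i^{(k)}$. *)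

theory Defs
  imports "HOL-Analysis.Analysis"
begin

text \<open>Spin configurations on sites 0..n-1 (0-based indexing of {1..n}); values outside
  the sites are fixed to 1 so that the configuration space is finite.\<close>
definition spins :: "nat \<Rightarrow> (nat \<Rightarrow> real) set" where
  "spins n = {\<sigma>. (\<forall>i<n. \<sigma> i = 1 \<or> \<sigma> i = -1) \<and> (\<forall>i\<ge>n. \<sigma> i = 1)}"

definition hamiltonian ::
  "nat \<Rightarrow> (nat set \<Rightarrow> real) \<Rightarrow> (nat \<Rightarrow> nat) \<Rightarrow> real \<Rightarrow> real \<Rightarrow> (nat \<Rightarrow> real) \<Rightarrow> real" where
  "hamiltonian n J \<tau> h0 h1 \<sigma> =
     - (\<Sum>X\<in>Pow {..<n}. J X * (\<Prod>i\<in>X. \<sigma> i))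
     - h0 * (\<Sum>i<n. \<sigma> i) - h1 * (\<Sum>i<n. real (\<tau> i) * \<sigma> i)"

definition partition_fn ::
  "nat \<Rightarrow> (nat set \<Rightarrow> real) \<Rightarrow> (nat \<Rightarrow> nat) \<Rightarrow> real \<Rightarrow> real \<Rightarrow> real" where
  "partition_fn n J \<tau> h0 h1 = (\<Sum>\<sigma>\<in>spins n. exp (- hamiltonian n J \<tau> h0 h1 \<sigma>))"

definition gibbs ::
  "nat \<Rightarrow> (nat set \<Rightarrow> real) \<Rightarrow> (nat \<Rightarrow> nat) \<Rightarrow> real \<Rightarrow> real \<Rightarrow> ((nat \<Rightarrow> real) \<Rightarrow> real) \<Rightarrow> real" where
  "gibbs n J \<tau> h0 h1 f =
     (\<Sum>\<sigma>\<in>spins n. f \<sigma> * exp (- hamiltonian n J \<tau> h0 h1 \<sigma>)) / partition_fn n J \<tau> h0 h1"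

text \<open>Gibbs expectation of an observable of k independent replicas
  (replica a < k is s a), under the k-fold product Gibbs measure.\<close>
definition gibbs_rep ::
  "nat \<Rightarrow> (nat set \<Rightarrow> real) \<Rightarrow> (nat \<Rightarrow> nat) \<Rightarrow> real \<Rightarrow> real \<Rightarrow> nat
     \<Rightarrow> ((nat \<Rightarrow> nat \<Rightarrow> real) \<Rightarrow> real) \<Rightarrow> real" where
  "gibbs_rep n J \<tau> h0 h1 k f =
     (\<Sum>s\<in>PiE {..<k} (\<lambda>_. spins n).
        f s * (\<Prod>a<k. exp (- hamiltonian n J \<tau> h0 h1 (s a))))
     / partition_fn n J \<tau> h0 h1 ^ k"

definition overlap :: "nat \<Rightarrow> nat \<Rightarrow> (nat \<Rightarrow> nat \<Rightarrow> real) \<Rightarrow> real" where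
  "overlap n k s = (1 / real n) * (\<Sum>i<n. \<Prod>a<k. s a i)"

end

theory Submission
  imports Defs
begin

lemma spins_finite: "finite (spins n)"
proof -
  have "spins n \<subseteq> (\<lambda>f i. if i < n then f i else 1) ` PiE {..<n} (\<lambda>_. {-1, 1::real})"
  proof
    fix \<sigma> assume s: "\<sigma> \<in> spins n"
    have "\<sigma> = (\<lambda>i. if i < n then restrict \<sigma> {..<n} i else 1)"
      using s by (auto simp: spins_def fun_eq_iff)
    moreover have "restrict \<sigma> {..<n} \<in> PiE {..<n} (\<lambda>_. {-1, 1::real})"
      using s by (auto simp: spins_def)
    ultimately show "\<sigma> \<in> (\<lambda>f i. if i < n then f i else 1) ` PiE {..<n} (\<lambda>_. {-1, 1::real})"
      by (rule image_eqI)
  qed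
  then show ?thesis by (rule finite_subset) (auto intro: finite_PiE)
qed

lemma one_spins: "(\<lambda>_. 1) \<in> spins n" by (simp add: spins_def)

lemma spins_abs: "\<sigma> \<in> spins n \<Longrightarrow> \<bar>\<sigma> i\<bar> \<le> 1"
proof -
  assume "\<sigma> \<in> spins n"
  then have "\<sigma> i = 1 \<or> \<sigma> i = -1" by (cases "i < n") (auto simp: spins_def)
  then show ?thesis by auto
qed

lemma Z_pos: "partition_fn n J \<tau> h h1 > 0"
  unfolding partition_fn_def
  by (rule sum_pos) (use spins_finite one_spins in auto)

definition gp where "gp n J \<tau> h h1 \<sigma> = exp (- hamiltonian n J \<tau> h h1 \<sigma>) / partition_fn n J \<tau> h h1"

lemma gibbs_alt: "gibbs n J \<tau> h h1 f = (\<Sum>\<sigma>\<in>spins n. f \<sigma> * gp n J \<tau> h h1 \<sigma>)"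
  unfolding gibbs_def gp_def by (simp add: sum_divide_distrib)

lemma gp_sum: "(\<Sum>\<sigma>\<in>spins n. gp n J \<tau> h h1 \<sigma>) = 1"
  using Z_pos[of n J \<tau> h h1]
  by (simp add: gp_def sum_divide_distrib[symmetric] partition_fn_def[symmetric])

lemma gp_nonneg: "gp n J \<tau> h h1 \<sigma> \<ge> 0"
  using Z_pos[of n J \<tau> h h1] by (simp add: gp_def)

lemma gibbs_abs:
  assumes "\<And>\<sigma>. \<sigma> \<in> spins n \<Longrightarrow> \<bar>f \<sigma>\<bar> \<le> 1"
  shows "\<bar>gibbs n J \<tau> h h1 f\<bar> \<le> 1"
proof -
  have "\<bar>gibbs n J \<tau> h h1 f\<bar> \<le> (\<Sum>\<sigma>\<in>spins n. \<bar>f \<sigma> * gp n J \<tau> h h1 \<sigma>\<bar>)"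
    unfolding gibbs_alt by (rule sum_abs)
  also have "\<dots> \<le> (\<Sum>\<sigma>\<in>spins n. gp n J \<tau> h h1 \<sigma>)"
  proof (rule sum_mono)
    fix \<sigma> assume "\<sigma> \<in> spins n"
    then show "\<bar>f \<sigma> * gp n J \<tau> h h1 \<sigma>\<bar> \<le> gp n J \<tau> h h1 \<sigma>"
      using assms[of \<sigma>] gp_nonneg[of n J \<tau> h h1 \<sigma>] mult_right_mono[of "\<bar>f \<sigma>\<bar>" 1 "gp n J \<tau> h h1 \<sigma>"]
      by (simp add: abs_mult)
  qed
  finally show ?thesis by (simp add: gp_sum)
qed

lemma rep_alt: "gibbs_rep n J \<tau> h h1 k f =
   (\<Sum>s\<in>PiE {..<k} (\<lambda>_. spins n). f s * (\<Prod>a<k. gp n J \<tau> h h1 (s a)))"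
  unfolding gibbs_rep_def gp_def
  by (simp add: sum_divide_distrib prod_dividef)

lemma rep_prod:
  fixes g p :: "'a \<Rightarrow> real"
  assumes "finite S"
  shows "(\<Sum>s\<in>PiE {..<k} (\<lambda>_. S). (\<Prod>a<k. g (s a)) * (\<Prod>a<k. p (s a))) = (\<Sum>\<sigma>\<in>S. g \<sigma> * p \<sigma>) ^ k"
proof -
  have "(\<Sum>s\<in>PiE {..<k} (\<lambda>_. S). (\<Prod>a<k. g (s a)) * (\<Prod>a<k. p (s a)))
      = (\<Sum>s\<in>PiE {..<k} (\<lambda>_. S). (\<Prod>a<k. g (s a) * p (s a)))"
    by (simp add: prod.distrib)
  also have "\<dots> = (\<Prod>a<k. \<Sum>\<sigma>\<in>S. g \<sigma> * p \<sigma>)"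
    using prod_sum_PiE[of "{..<k}" "\<lambda>_. S" "\<lambda>_ y. g y * p y"] assms by simp
  also have "\<dots> = (\<Sum>\<sigma>\<in>S. g \<sigma> * p \<sigma>) ^ k" by simp
  finally show ?thesis .
qed

lemma var_identity:
  fixes f \<pi> :: "'a \<Rightarrow> real"
  assumes "(\<Sum>s\<in>P. \<pi> s) = 1"
  shows "(\<Sum>s\<in>P. (f s - (\<Sum>t\<in>P. f t * \<pi> t))\<^sup>2 * \<pi> s)
       = (\<Sum>s\<in>P. (f s)\<^sup>2 * \<pi> s) - (\<Sum>t\<in>P. f t * \<pi> t)\<^sup>2"
proof -
  define c where "c = (\<Sum>t\<in>P. f t * \<pi> t)"
  have "(\<Sum>s\<in>P. (f s - c)\<^sup>2 * \<pi> s) = (\<Sum>s\<in>P. (f s)\<^sup>2 * \<pi> s - 2 * c * (f s * \<pi> s) + c\<^sup>2 * \<pi> s)"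
    by (rule sum.cong) (auto simp: power2_diff algebra_simps)
  also have "\<dots> = (\<Sum>s\<in>P. (f s)\<^sup>2 * \<pi> s) - 2 * c * c + c\<^sup>2 * (\<Sum>s\<in>P. \<pi> s)"
    by (simp add: sum.distrib sum_subtractf sum_distrib_left c_def)
  finally show ?thesis using assms by (simp add: c_def power2_eq_square)
qed

lemma pow_bound:
  fixes a b :: real
  assumes "b \<le> a" "\<bar>a\<bar> \<le> 1" "\<bar>b\<bar> \<le> 1"
  shows "a ^ k - b ^ k \<le> real k * (a - b)"
proof -
  have "(\<Sum>i<k. b^(k - Suc i) * a^i) \<le> (\<Sum>i<k. 1)"
  proof (rule sum_mono)
    fix i
    have "\<bar>b^(k - Suc i) * a^i\<bar> \<le> 1"
      using assms by (simp add: abs_mult power_abs power_le_one mult_le_one)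
    then show "b^(k - Suc i) * a^i \<le> 1" by simp
  qed
  then have "(\<Sum>i<k. b^(k - Suc i) * a^i) \<le> real k" by simp
  then have "(a - b) * (\<Sum>i<k. b^(k - Suc i) * a^i) \<le> (a - b) * real k"
    using assms(1) by (intro mult_left_mono) auto
  then show ?thesis by (simp add: power_diff_sumr2 mult.commute)
qed

lemma dW: "((\<lambda>h. exp (- hamiltonian n J \<tau> h h1 \<sigma>)) has_real_derivative
   (\<Sum>i<n. \<sigma> i) * exp (- hamiltonian n J \<tau> h h1 \<sigma>)) (at h)"
  unfolding hamiltonian_def
  by (auto intro!: derivative_eq_intros)

lemma d_gibbs:
  "((\<lambda>h. gibbs n J \<tau> h h1 (\<lambda>\<sigma>. \<sigma> i)) has_real_derivative
     (\<Sum>j<n. gibbs n J \<tau> h h1 (\<lambda>\<sigma>. \<sigma> i * \<sigma> j)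
        - gibbs n J \<tau> h h1 (\<lambda>\<sigma>. \<sigma> i) * gibbs n J \<tau> h h1 (\<lambda>\<sigma>. \<sigma> j))) (at h)"
proof -
  define W where "W h \<sigma> = exp (- hamiltonian n J \<tau> h h1 \<sigma>)" for h \<sigma>
  define Z where "Z h = partition_fn n J \<tau> h h1" for h
  define N where "N h = (\<Sum>\<sigma>\<in>spins n. \<sigma> i * W h \<sigma>)" for h
  define N' where "N' = (\<Sum>\<sigma>\<in>spins n. \<sigma> i * ((\<Sum>j<n. \<sigma> j) * W h \<sigma>))"
  define Z' where "Z' = (\<Sum>\<sigma>\<in>spins n. (\<Sum>j<n. \<sigma> j) * W h \<sigma>)"
  have dN: "(N has_real_derivative N') (at h)"
    unfolding N_def N'_def W_def by (intro DERIV_sum DERIV_cmult dW)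
  have dZ: "(Z has_real_derivative Z') (at h)"
    unfolding Z_def Z'_def W_def partition_fn_def by (intro DERIV_sum dW)
  have Zp: "Z h > 0" unfolding Z_def by (rule Z_pos)
  have eqf: "(\<lambda>h. gibbs n J \<tau> h h1 (\<lambda>\<sigma>. \<sigma> i)) = (\<lambda>h. N h / Z h)"
    by (simp add: gibbs_def fun_eq_iff N_def W_def Z_def)
  have gij: "gibbs n J \<tau> h h1 (\<lambda>\<sigma>. \<sigma> i * \<sigma> j) = (\<Sum>\<sigma>\<in>spins n. \<sigma> i * \<sigma> j * W h \<sigma>) / Z h" for j
    by (simp add: gibbs_def W_def Z_def)
  have gj: "gibbs n J \<tau> h h1 (\<lambda>\<sigma>. \<sigma> j) = (\<Sum>\<sigma>\<in>spins n. \<sigma> j * W h \<sigma>) / Z h" for j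
    by (simp add: gibbs_def W_def Z_def)
  have N'eq: "N' = (\<Sum>j<n. \<Sum>\<sigma>\<in>spins n. \<sigma> i * \<sigma> j * W h \<sigma>)"
    unfolding N'_def by (subst sum.swap) (simp add: sum_distrib_left sum_distrib_right mult.assoc)
  have Z'eq: "Z' = (\<Sum>j<n. \<Sum>\<sigma>\<in>spins n. \<sigma> j * W h \<sigma>)"
    unfolding Z'_def by (subst sum.swap) (simp add: sum_distrib_right)
  have "(N' * Z h - N h * Z') / (Z h * Z h)
      = (\<Sum>j<n. gibbs n J \<tau> h h1 (\<lambda>\<sigma>. \<sigma> i * \<sigma> j)
        - gibbs n J \<tau> h h1 (\<lambda>\<sigma>. \<sigma> i) * gibbs n J \<tau> h h1 (\<lambda>\<sigma>. \<sigma> j))"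
  proof -
    have "(N' * Z h - N h * Z') / (Z h * Z h) = N' / Z h - (N h / Z h) * (Z' / Z h)"
      using Zp by (simp add: field_simps)
    also have "\<dots> = (\<Sum>j<n. gibbs n J \<tau> h h1 (\<lambda>\<sigma>. \<sigma> i * \<sigma> j))
        - gibbs n J \<tau> h h1 (\<lambda>\<sigma>. \<sigma> i) * (\<Sum>j<n. gibbs n J \<tau> h h1 (\<lambda>\<sigma>. \<sigma> j))"
      unfolding gij gj N'eq Z'eq by (simp add: sum_divide_distrib N_def)
    also have "\<dots> = (\<Sum>j<n. gibbs n J \<tau> h h1 (\<lambda>\<sigma>. \<sigma> i * \<sigma> j)
        - gibbs n J \<tau> h h1 (\<lambda>\<sigma>. \<sigma> i) * gibbs n J \<tau> h h1 (\<lambda>\<sigma>. \<sigma> j))"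
      by (simp add: sum_subtractf sum_distrib_left)
    finally show ?thesis .
  qed
  with DERIV_divide[OF dN dZ] Zp show ?thesis unfolding eqf by simp
qed

lemma var_formula:
  "gibbs_rep n J \<tau> h h1 k (\<lambda>s. (overlap n k s - gibbs_rep n J \<tau> h h1 k (overlap n k))\<^sup>2)
   = (1 / real n)\<^sup>2 * (\<Sum>i<n. \<Sum>j<n. gibbs n J \<tau> h h1 (\<lambda>\<sigma>. \<sigma> i * \<sigma> j) ^ k
        - gibbs n J \<tau> h h1 (\<lambda>\<sigma>. \<sigma> i) ^ k * gibbs n J \<tau> h h1 (\<lambda>\<sigma>. \<sigma> j) ^ k)"
proof -
  define P where "P = PiE {..<k} (\<lambda>_. spins n)"
  define \<pi> where "\<pi> s = (\<Prod>a<k. gp n J \<tau> h h1 (s a))" for s :: "nat \<Rightarrow> nat \<Rightarrow> real"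
  define Q where "Q = overlap n k"
  note rp = rep_prod[OF spins_finite[of n], where k=k and p="gp n J \<tau> h h1", folded P_def \<pi>_def]
  have hs: "(\<Sum>s\<in>P. \<pi> s) = 1"
    using rp[of "\<lambda>_. 1"] by (simp add: gp_sum)
  have EQ: "(\<Sum>s\<in>P. Q s * \<pi> s) = (1 / real n) * (\<Sum>i<n. gibbs n J \<tau> h h1 (\<lambda>\<sigma>. \<sigma> i) ^ k)"
  proof -
    have "(\<Sum>s\<in>P. Q s * \<pi> s) = (1 / real n) * (\<Sum>i<n. \<Sum>s\<in>P. (\<Prod>a<k. s a i) * \<pi> s)"
      unfolding Q_def overlap_def
      by (subst sum.swap) (simp add: sum_distrib_left sum_distrib_right mult.assoc)
    also have "\<dots> = (1 / real n) * (\<Sum>i<n. gibbs n J \<tau> h h1 (\<lambda>\<sigma>. \<sigma> i) ^ k)"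
      using rp[of "\<lambda>\<sigma>. \<sigma> _"] by (simp add: gibbs_alt)
    finally show ?thesis .
  qed
  have EQ2: "(\<Sum>s\<in>P. (Q s)\<^sup>2 * \<pi> s) = (1 / real n)\<^sup>2 * (\<Sum>i<n. \<Sum>j<n. gibbs n J \<tau> h h1 (\<lambda>\<sigma>. \<sigma> i * \<sigma> j) ^ k)"
  proof -
    have sq: "(Q s)\<^sup>2 = (1 / real n)\<^sup>2 * (\<Sum>i<n. \<Sum>j<n. \<Prod>a<k. s a i * s a j)" for s
      unfolding Q_def overlap_def
      by (simp add: power2_eq_square sum_product prod.distrib)
    have "(\<Sum>s\<in>P. (Q s)\<^sup>2 * \<pi> s) = (1 / real n)\<^sup>2 * (\<Sum>i<n. \<Sum>j<n. \<Sum>s\<in>P. (\<Prod>a<k. s a i * s a j) * \<pi> s)"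
      unfolding sq
      by (simp add: sum_distrib_left sum_distrib_right mult.assoc sum.swap[of _ P])
    also have "\<dots> = (1 / real n)\<^sup>2 * (\<Sum>i<n. \<Sum>j<n. gibbs n J \<tau> h h1 (\<lambda>\<sigma>. \<sigma> i * \<sigma> j) ^ k)"
      using rp[of "\<lambda>\<sigma>. \<sigma> _ * \<sigma> _"] by (simp add: gibbs_alt)
    finally show ?thesis .
  qed
  have "gibbs_rep n J \<tau> h h1 k (\<lambda>s. (overlap n k s - gibbs_rep n J \<tau> h h1 k (overlap n k))\<^sup>2)
      = (\<Sum>s\<in>P. (Q s - (\<Sum>t\<in>P. Q t * \<pi> t))\<^sup>2 * \<pi> s)"
    unfolding rep_alt P_def \<pi>_def Q_def ..
  also have "\<dots> = (\<Sum>s\<in>P. (Q s)\<^sup>2 * \<pi> s) - (\<Sum>t\<in>P. Q t * \<pi> t)\<^sup>2"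
    by (rule var_identity[OF hs])
  also have "\<dots> = (1 / real n)\<^sup>2 * (\<Sum>i<n. \<Sum>j<n. gibbs n J \<tau> h h1 (\<lambda>\<sigma>. \<sigma> i * \<sigma> j) ^ k
        - gibbs n J \<tau> h h1 (\<lambda>\<sigma>. \<sigma> i) ^ k * gibbs n J \<tau> h h1 (\<lambda>\<sigma>. \<sigma> j) ^ k)"
    unfolding EQ EQ2
    by (simp add: power_mult_distrib power2_eq_square sum_product sum_subtractf algebra_simps)
  finally show ?thesis .
qed

theorem theorem2p1:
  fixes n k :: nat and \<theta> hlo hhi h1 \<alpha> :: real
    and J :: "nat set \<Rightarrow> real" and \<tau> :: "nat \<Rightarrow> nat"
  assumes "n \<ge> 1" and "1/2 < \<theta>" and "\<theta> \<le> 7/8" and "k \<ge> 1"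
    and "0 < hlo" and "hlo \<le> hhi" and "hhi < 1"
    and "0 \<le> h1" and "h1 \<le> 1" and "0 \<le> \<alpha>" and "\<alpha> \<le> 1"
    and "\<And>X. X \<subseteq> {..<n} \<Longrightarrow> J X \<ge> 0"
    and "\<And>h0 i j. h0 \<in> {hlo..hhi} \<Longrightarrow> i < n \<Longrightarrow> j < n \<Longrightarrow>
           gibbs n J \<tau> h0 h1 (\<lambda>\<sigma>. \<sigma> i * \<sigma> j)
           - gibbs n J \<tau> h0 h1 (\<lambda>\<sigma>. \<sigma> i) * gibbs n J \<tau> h0 h1 (\<lambda>\<sigma>. \<sigma> j) \<ge> 0"
  shows "integral {hlo..hhi} (\<lambda>h0. gibbs_rep n J \<tau> h0 h1 k
           (\<lambda>s. (overlap n k s - gibbs_rep n J \<tau> h0 h1 k (overlap n k))\<^sup>2))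
         \<le> 2 * real k / real n"
proof -
  define F where "F h0 = gibbs_rep n J \<tau> h0 h1 k
           (\<lambda>s. (overlap n k s - gibbs_rep n J \<tau> h0 h1 k (overlap n k))\<^sup>2)" for h0
  define m where "m i h = gibbs n J \<tau> h h1 (\<lambda>\<sigma>. \<sigma> i)" for i h
  define g where "g i j h = gibbs n J \<tau> h h1 (\<lambda>\<sigma>. \<sigma> i * \<sigma> j)" for i j h
  define M where "M h = (1 / real n) * (\<Sum>i<n. m i h)" for h
  define D where "D h = (1 / real n) * (\<Sum>i<n. \<Sum>j<n. g i j h - m i h * m j h)" for h
  have npos: "real n > 0" using assms(1) by simp
  have mabs: "\<bar>m i h\<bar> \<le> 1" for i h
    unfolding m_def by (rule gibbs_abs) (rule spins_abs)
  have gabs: "\<bar>g i j h\<bar> \<le> 1" for i j h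
    unfolding g_def
  proof (rule gibbs_abs)
    fix \<sigma> :: "nat \<Rightarrow> real" assume "\<sigma> \<in> spins n"
    then have "\<bar>\<sigma> i\<bar> \<le> 1" "\<bar>\<sigma> j\<bar> \<le> 1" by (auto intro: spins_abs)
    then show "\<bar>\<sigma> i * \<sigma> j\<bar> \<le> 1" by (simp add: abs_mult mult_le_one)
  qed
  have dM: "(M has_real_derivative D h) (at h)" for h
    unfolding M_def D_def m_def g_def
    by (intro DERIV_cmult DERIV_sum d_gibbs)
  have FTC: "(D has_integral (M hhi - M hlo)) {hlo..hhi}"
    using assms(6)
    by (intro fundamental_theorem_of_calculus)
       (auto simp: has_real_derivative_iff_has_vector_derivative[symmetric] intro: DERIV_subset[OF dM])
  have G: "((\<lambda>h. real k / real n * D h) has_integral (real k / real n * (M hhi - M hlo))) {hlo..hhi}"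
    by (rule has_integral_mult_right[OF FTC])
  have Mabs: "\<bar>M h\<bar> \<le> 1" for h
  proof -
    have "\<bar>\<Sum>i<n. m i h\<bar> \<le> (\<Sum>i<n. \<bar>m i h\<bar>)" by (rule sum_abs)
    also have "\<dots> \<le> (\<Sum>i<n. 1)" by (rule sum_mono) (rule mabs)
    finally have "\<bar>\<Sum>i<n. m i h\<bar> \<le> real n" by simp
    then show ?thesis using npos by (simp add: M_def abs_mult divide_le_eq)
  qed
  have pw: "F h \<le> real k / real n * D h" if h: "h \<in> {hlo..hhi}" for h
  proof -
    have "F h = (1 / real n)\<^sup>2 * (\<Sum>i<n. \<Sum>j<n. g i j h ^ k - (m i h * m j h) ^ k)"
      unfolding F_def var_formula g_def m_def by (simp add: power_mult_distrib)
    also have "\<dots> \<le> (1 / real n)\<^sup>2 * (\<Sum>i<n. \<Sum>j<n. real k * (g i j h - m i h * m j h))"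
    proof (intro mult_left_mono sum_mono)
      fix i j assume "i \<in> {..<n}" "j \<in> {..<n}"
      then have "m i h * m j h \<le> g i j h" using assms(13)[OF h, of i j] by (simp add: m_def g_def)
      moreover have "\<bar>m i h * m j h\<bar> \<le> 1" using mabs[of i h] mabs[of j h] by (simp add: abs_mult mult_le_one)
      ultimately show "g i j h ^ k - (m i h * m j h) ^ k \<le> real k * (g i j h - m i h * m j h)"
        using gabs[of i j h] by (intro pow_bound)
    qed simp
    also have "\<dots> = real k / real n * D h"
    proof -
      have "(\<Sum>i<n. \<Sum>j<n. real k * (g i j h - m i h * m j h))
          = real k * (\<Sum>i<n. \<Sum>j<n. g i j h - m i h * m j h)"
        by (simp add: sum_distrib_left)
      then show ?thesis unfolding D_def using npos by (simp add: power2_eq_square)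
    qed
    finally show ?thesis .
  qed
  show ?thesis
  proof (cases "F integrable_on {hlo..hhi}")
    case True
    have "integral {hlo..hhi} F \<le> integral {hlo..hhi} (\<lambda>h. real k / real n * D h)"
      using True G pw by (intro integral_le) auto
    also have "\<dots> = real k / real n * (M hhi - M hlo)" using G by (rule integral_unique)
    also have "\<dots> \<le> real k / real n * 2"
      using Mabs[of hhi] Mabs[of hlo] npos by (intro mult_left_mono) auto
    finally show ?thesis unfolding F_def[abs_def] by (simp add: mult.commute)
  next
    case False
    then show ?thesis unfolding F_def[abs_def] using npos by (simp add: not_integrable_integral)
  qed
qed

end
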